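(* Let $V$ be a vector space over a field $\mathbb{K}$ and $F$ a bilinear form on $V$, and let $\lambda_F\in\mathrm{End}(\mathcal{T}(V))$ be defined by $\lambda_F(u)=\Lambda_F(u)(1)$. Then: (i) $\lambda_F(1)=1$ and $\lambda_F(x)=x$ for $x\in V$; (ii) $\lambda_F(x\otimes u)=i_x^F(\lambda_F(u))+x\otimes\lambda_F(u)$ for $x\in V$, $u\in\mathcal{T}(V)$; (iii) $\lambda_F\circ i_f=i_f\circ\lambda_F$ for all $f\in V^*$; (iv) if $G$ is another bilinear form on $V$, then $\lambda_F\circ\lambda_G=\lambda_{F+G}$; (v) $\lambda_0=\mathrm{Id}_{\mathcal{T}(V)}$; (vi) $\lambda_F:\mathcal{T}(V)\to\mathcal{T}(V)$ is a bijection; (vii) $\lambda_F$ preserves parity: for $x_1,\dots,x_p\in V$, $\alpha(\lambda_F(x_1\otimes\cdots\otimes x_p))=(-1)^p\lambda_F(x_1\otimes\cdots\otimes x_p)$.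
   Context: $\mathcal{T}(V)$ is the tensor algebra of $V$ (product $\otimes$). $\alpha$ is the algebra automorphism of $\mathcal{T}(V)$ with $\alpha(x_1\otimes\cdots\otimes x_p)=(-1)^p x_1\otimes\cdots\otimes x_p$. For $x\in V$, $e_x(u)=x\otimes u$. For $f\in V^*$, $i_f$ is the unique linear map on $\mathcal{T}(V)$ with $i_f(1)=0$ and $i_f(x\otimes u)=f(x)u-x\otimes i_f(u)$ ($x\in V$). For a bilinear form $F$ and $x\in V$, $i_x^F:=i_{f_x}$ with $f_x(y)=F(x,y)$. $\Lambda_F:\mathcal{T}(V)\to\mathrm{End}(\mathcal{T}(V))$ is the unique unital algebra homomorphism with $\Lambda_F(x)=e_x+i_x^F$ for $x\in V$. *)

theory Defs
  imports Main "HOL-Library.Poly_Mapping"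
begin

(* Model: a K-vector space V with basis indexed by type 'b is the space of finitely
supported functions 'b \<Rightarrow>\<^sub>0 'k. Its tensor algebra T(V) is then the space of
finitely supported functions on words over the basis, 'b list \<Rightarrow>\<^sub>0 'k
(the basis of V^{\<otimes>p} being the words of length p). *)

type_synonym ('b, 'k) vec = "'b \<Rightarrow>\<^sub>0 'k"
type_synonym ('b, 'k) tens = "'b list \<Rightarrow>\<^sub>0 'k"

definition smul :: "'k::field \<Rightarrow> ('a \<Rightarrow>\<^sub>0 'k) \<Rightarrow> ('a \<Rightarrow>\<^sub>0 'k)" where
  "smul c u = Poly_Mapping.map (\<lambda>a. c * a) u"

definition tmult :: "('b, 'k::field) tens \<Rightarrow> ('b, 'k) tens \<Rightarrow> ('b, 'k) tens" where
  "tmult u v = (\<Sum>w1\<in>Poly_Mapping.keys u. \<Sum>w2\<in>Poly_Mapping.keys v.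
      Poly_Mapping.single (w1 @ w2) (Poly_Mapping.lookup u w1 * Poly_Mapping.lookup v w2))"

definition tone :: "('b, 'k::field) tens" where
  "tone = Poly_Mapping.single [] 1"

definition incl :: "('b, 'k::field) vec \<Rightarrow> ('b, 'k) tens" where
  "incl x = (\<Sum>b\<in>Poly_Mapping.keys x. Poly_Mapping.single [b] (Poly_Mapping.lookup x b))"

definition tword :: "('b, 'k::field) vec list \<Rightarrow> ('b, 'k) tens" where
  "tword xs = foldr (\<lambda>x u. tmult (incl x) u) xs tone"

definition lin_fun :: "(('b, 'k::field) vec \<Rightarrow> 'k) \<Rightarrow> bool" where
  "lin_fun f \<longleftrightarrow> (\<forall>x y. f (x + y) = f x + f y) \<and> (\<forall>c x. f (smul c x) = c * f x)"

definition bilin :: "(('b, 'k::field) vec \<Rightarrow> ('b, 'k) vec \<Rightarrow> 'k) \<Rightarrow> bool" where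
  "bilin F \<longleftrightarrow> (\<forall>y. lin_fun (\<lambda>x. F x y)) \<and> (\<forall>x. lin_fun (\<lambda>y. F x y))"

definition tlin :: "(('b, 'k::field) tens \<Rightarrow> ('b, 'k) tens) \<Rightarrow> bool" where
  "tlin g \<longleftrightarrow> (\<forall>u v. g (u + v) = g u + g v) \<and> (\<forall>c u. g (smul c u) = smul c (g u))"

definition ex :: "('b, 'k::field) vec \<Rightarrow> ('b, 'k) tens \<Rightarrow> ('b, 'k) tens" where
  "ex x u = tmult (incl x) u"

definition alpha :: "('b, 'k::field) tens \<Rightarrow> ('b, 'k) tens" where
  "alpha u = Abs_poly_mapping (\<lambda>w. (-1) ^ length w * Poly_Mapping.lookup u w)"

definition iop :: "(('b, 'k::field) vec \<Rightarrow> 'k) \<Rightarrow> ('b, 'k) tens \<Rightarrow> ('b, 'k) tens" where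
  "iop f = (THE g. tlin g \<and> g tone = 0 \<and>
      (\<forall>x u. g (ex x u) = smul (f x) u - ex x (g u)))"

definition iF :: "(('b, 'k::field) vec \<Rightarrow> ('b, 'k) vec \<Rightarrow> 'k) \<Rightarrow> ('b, 'k) vec
    \<Rightarrow> ('b, 'k) tens \<Rightarrow> ('b, 'k) tens" where
  "iF F x = iop (\<lambda>y. F x y)"

definition LamF :: "(('b, 'k::field) vec \<Rightarrow> ('b, 'k) vec \<Rightarrow> 'k)
    \<Rightarrow> ('b, 'k) tens \<Rightarrow> ('b, 'k) tens \<Rightarrow> ('b, 'k) tens" where
  "LamF F = (THE \<Phi>. (\<forall>u. tlin (\<Phi> u)) \<and>
      (\<forall>u v. \<Phi> (u + v) = (\<lambda>w. \<Phi> u w + \<Phi> v w)) \<and>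
      (\<forall>c u. \<Phi> (smul c u) = (\<lambda>w. smul c (\<Phi> u w))) \<and>
      \<Phi> tone = id \<and>
      (\<forall>u v. \<Phi> (tmult u v) = \<Phi> u \<circ> \<Phi> v) \<and>
      (\<forall>x. \<Phi> (incl x) = (\<lambda>w. ex x w + iF F x w)))"

definition lamF :: "(('b, 'k::field) vec \<Rightarrow> ('b, 'k) vec \<Rightarrow> 'k)
    \<Rightarrow> ('b, 'k) tens \<Rightarrow> ('b, 'k) tens" where
  "lamF F u = LamF F u tone"

end

theory Submission
  imports Defs
begin


lemma lookup_smul [simp]: "Poly_Mapping.lookup (smul c u) w = c * Poly_Mapping.lookup u w"
  by (simp add: smul_def map.rep_eq when_def)

lemma smul_add_right: "smul c (u + v) = smul c u + smul c v"
  by (rule poly_mapping_eqI) (simp add: lookup_add algebra_simps)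
lemma smul_add_left: "smul (a + b) u = smul a u + smul b u"
  by (rule poly_mapping_eqI) (simp add: lookup_add algebra_simps)
lemma smul_smul [simp]: "smul a (smul b u) = smul (a * b) u"
  by (rule poly_mapping_eqI) (simp add: algebra_simps)
lemma smul_one [simp]: "smul 1 u = u"
  by (rule poly_mapping_eqI) simp
lemma smul_zero_left [simp]: "smul 0 u = 0"
  by (rule poly_mapping_eqI) simp
lemma smul_zero_right [simp]: "smul c 0 = 0"
  by (rule poly_mapping_eqI) simp
lemma smul_single: "smul c (Poly_Mapping.single w a) = Poly_Mapping.single w (c * a)"
  by (rule poly_mapping_eqI) (simp add: lookup_single when_def)
lemma smul_minus_right: "smul c (u - v) = smul c u - smul c v"
  by (rule poly_mapping_eqI) (simp add: lookup_minus algebra_simps)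
lemma smul_uminus_right: "smul c (- u) = - smul c u"
  by (rule poly_mapping_eqI) (simp add: algebra_simps)
lemma smul_uminus_left: "smul (- c) u = - smul c u"
  by (rule poly_mapping_eqI) (simp add: algebra_simps)
lemma smul_sum_right: "smul c (\<Sum>i\<in>A. f i) = (\<Sum>i\<in>A. smul c (f i))"
  by (induction A rule: infinite_finite_induct) (auto simp: smul_add_right)
lemma smul_sum_left: "smul (\<Sum>i\<in>A. f i) u = (\<Sum>i\<in>A. smul (f i) u)"
  by (induction A rule: infinite_finite_induct) (auto simp: smul_add_left)

lemma pm_decomp: "u = (\<Sum>w\<in>Poly_Mapping.keys u. Poly_Mapping.single w (Poly_Mapping.lookup u w))"
  by (rule poly_mapping_eqI) (auto simp: lookup_sum lookup_single when_def in_keys_iff)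

lemma pm_decomp_smul: "u = (\<Sum>w\<in>Poly_Mapping.keys u. smul (Poly_Mapping.lookup u w) (Poly_Mapping.single w 1))"
  by (subst pm_decomp) (simp add: smul_single)

lemma pm_induct:
  fixes P :: "('a \<Rightarrow>\<^sub>0 'k::field) \<Rightarrow> bool"
  assumes "P 0" "\<And>u v. P u \<Longrightarrow> P v \<Longrightarrow> P (u + v)" "\<And>w c. P (Poly_Mapping.single w c)"
  shows "P u"
proof -
  have "P (\<Sum>w\<in>A. Poly_Mapping.single w (Poly_Mapping.lookup u w))" if "finite A" for A
    using that by (induction A rule: finite_induct) (auto simp: assms)
  then show ?thesis by (subst pm_decomp) simp
qed

lemma tmult_superset:
  assumes "finite A" "Poly_Mapping.keys u \<subseteq> A" "finite B" "Poly_Mapping.keys v \<subseteq> B"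
  shows "tmult u v = (\<Sum>w1\<in>A. \<Sum>w2\<in>B.
      Poly_Mapping.single (w1 @ w2) (Poly_Mapping.lookup u w1 * Poly_Mapping.lookup v w2))"
proof -
  have "tmult u v = (\<Sum>w1\<in>A. \<Sum>w2\<in>Poly_Mapping.keys v.
      Poly_Mapping.single (w1 @ w2) (Poly_Mapping.lookup u w1 * Poly_Mapping.lookup v w2))"
    unfolding tmult_def
    by (rule sum.mono_neutral_left) (use assms in \<open>auto simp: in_keys_iff\<close>)
  also have "\<dots> = (\<Sum>w1\<in>A. \<Sum>w2\<in>B.
      Poly_Mapping.single (w1 @ w2) (Poly_Mapping.lookup u w1 * Poly_Mapping.lookup v w2))"
    by (rule sum.cong[OF refl], rule sum.mono_neutral_left) (use assms in \<open>auto simp: in_keys_iff\<close>)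
  finally show ?thesis .
qed



lemma keys_smul: "Poly_Mapping.keys (smul c u) \<subseteq> Poly_Mapping.keys u"
  by (auto simp: in_keys_iff)

lemma tmult_add_left: "tmult (u + v) t = tmult u t + tmult v t"
proof -
  let ?A = "Poly_Mapping.keys u \<union> Poly_Mapping.keys v" and ?B = "Poly_Mapping.keys t"
  have 1: "tmult (u + v) t = (\<Sum>w1\<in>?A. \<Sum>w2\<in>?B. Poly_Mapping.single (w1 @ w2)
      (Poly_Mapping.lookup (u+v) w1 * Poly_Mapping.lookup t w2))"
    by (rule tmult_superset) (auto dest: subsetD[OF keys_add])
  have 2: "tmult u t = (\<Sum>w1\<in>?A. \<Sum>w2\<in>?B. Poly_Mapping.single (w1 @ w2)
      (Poly_Mapping.lookup u w1 * Poly_Mapping.lookup t w2))"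
    by (rule tmult_superset) auto
  have 3: "tmult v t = (\<Sum>w1\<in>?A. \<Sum>w2\<in>?B. Poly_Mapping.single (w1 @ w2)
      (Poly_Mapping.lookup v w1 * Poly_Mapping.lookup t w2))"
    by (rule tmult_superset) auto
  show ?thesis unfolding 1 2 3
    by (simp add: lookup_add distrib_right single_add sum.distrib)
qed

lemma tmult_add_right: "tmult t (u + v) = tmult t u + tmult t v"
proof -
  let ?B = "Poly_Mapping.keys u \<union> Poly_Mapping.keys v" and ?A = "Poly_Mapping.keys t"
  have 1: "tmult t (u + v) = (\<Sum>w1\<in>?A. \<Sum>w2\<in>?B. Poly_Mapping.single (w1 @ w2)
      (Poly_Mapping.lookup t w1 * Poly_Mapping.lookup (u+v) w2))"
    by (rule tmult_superset) (auto dest: subsetD[OF keys_add])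
  have 2: "tmult t u = (\<Sum>w1\<in>?A. \<Sum>w2\<in>?B. Poly_Mapping.single (w1 @ w2)
      (Poly_Mapping.lookup t w1 * Poly_Mapping.lookup u w2))"
    by (rule tmult_superset) auto
  have 3: "tmult t v = (\<Sum>w1\<in>?A. \<Sum>w2\<in>?B. Poly_Mapping.single (w1 @ w2)
      (Poly_Mapping.lookup t w1 * Poly_Mapping.lookup v w2))"
    by (rule tmult_superset) auto
  show ?thesis unfolding 1 2 3
    by (simp add: lookup_add distrib_left single_add sum.distrib)
qed

lemma tmult_smul_left: "tmult (smul c u) v = smul c (tmult u v)"
proof -
  have 1: "tmult (smul c u) v = (\<Sum>w1\<in>Poly_Mapping.keys u. \<Sum>w2\<in>Poly_Mapping.keys v. Poly_Mapping.single (w1 @ w2)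
      (Poly_Mapping.lookup (smul c u) w1 * Poly_Mapping.lookup v w2))"
    by (rule tmult_superset) (auto dest: subsetD[OF keys_smul])
  show ?thesis unfolding 1 by (simp add: tmult_def smul_sum_right smul_single mult.assoc mult.left_commute)
qed

lemma tmult_smul_right: "tmult u (smul c v) = smul c (tmult u v)"
proof -
  have 1: "tmult u (smul c v) = (\<Sum>w1\<in>Poly_Mapping.keys u. \<Sum>w2\<in>Poly_Mapping.keys v. Poly_Mapping.single (w1 @ w2)
      (Poly_Mapping.lookup u w1 * Poly_Mapping.lookup (smul c v) w2))"
    by (rule tmult_superset) (auto dest: subsetD[OF keys_smul])
  show ?thesis unfolding 1 by (simp add: tmult_def smul_sum_right smul_single mult.assoc mult.left_commute)
qed

lemma tmult_single: "tmult (Poly_Mapping.single w1 a) (Poly_Mapping.single w2 b) = Poly_Mapping.single (w1 @ w2) (a * b)"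
  by (subst tmult_superset[where A="{w1}" and B="{w2}"]) auto

lemma tmult_zero_left [simp]: "tmult 0 v = 0"
  by (simp add: tmult_def)
lemma tmult_zero_right [simp]: "tmult v 0 = 0"
  by (simp add: tmult_def)

lemma tmult_sum_left: "tmult (\<Sum>i\<in>A. f i) v = (\<Sum>i\<in>A. tmult (f i) v)"
  by (induction A rule: infinite_finite_induct) (auto simp: tmult_add_left)
lemma tmult_sum_right: "tmult v (\<Sum>i\<in>A. f i) = (\<Sum>i\<in>A. tmult v (f i))"
  by (induction A rule: infinite_finite_induct) (auto simp: tmult_add_right)
lemma tmult_minus_left: "tmult (u - v) t = tmult u t - tmult v t"
  by (metis add_diff_cancel diff_add_cancel tmult_add_left)
lemma tmult_minus_right: "tmult t (u - v) = tmult t u - tmult t v"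
  by (metis add_diff_cancel diff_add_cancel tmult_add_right)

lemma tmult_tone_right [simp]: "tmult u tone = u"
  unfolding tone_def
  by (subst tmult_superset[where A="Poly_Mapping.keys u" and B="{[]}"]) (auto simp: pm_decomp[symmetric])
lemma tmult_tone_left [simp]: "tmult tone u = u"
  unfolding tone_def
  by (subst tmult_superset[where B="Poly_Mapping.keys u" and A="{[]}"]) (auto simp: pm_decomp[symmetric])

lemma incl_decomp: "incl x = (\<Sum>b\<in>Poly_Mapping.keys x. smul (Poly_Mapping.lookup x b) (Poly_Mapping.single [b] 1))"
  unfolding incl_def by (simp add: smul_single)

lemma incl_delta [simp]: "incl (Poly_Mapping.single b 1) = Poly_Mapping.single [b] (1::'k::field)"
  unfolding incl_def by simp

lemma ex_decomp: "ex x u = (\<Sum>b\<in>Poly_Mapping.keys x. smul (Poly_Mapping.lookup x b) (tmult (Poly_Mapping.single [b] 1) u))"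
  unfolding ex_def incl_decomp by (simp add: tmult_sum_left tmult_smul_left)

lemma ex_single: "tmult (Poly_Mapping.single [b] 1) (Poly_Mapping.single w c) = Poly_Mapping.single (b # w) c"
  by (simp add: tmult_single)

lemma ex_add: "ex x (u + v) = ex x u + ex x v" by (simp add: ex_def tmult_add_right)
lemma ex_smul: "ex x (smul c u) = smul c (ex x u)" by (simp add: ex_def tmult_smul_right)
lemma ex_minus: "ex x (u - v) = ex x u - ex x v" by (simp add: ex_def tmult_minus_right)
lemma ex_zero [simp]: "ex x 0 = 0" by (simp add: ex_def)
lemma ex_sum: "ex x (\<Sum>i\<in>A. f i) = (\<Sum>i\<in>A. ex x (f i))" by (simp add: ex_def tmult_sum_right)

lemma lin_fun_zero: "lin_fun f \<Longrightarrow> f 0 = 0"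
  unfolding lin_fun_def by (metis add_cancel_right_right add_0)
lemma lin_fun_sum: "lin_fun f \<Longrightarrow> f (\<Sum>i\<in>A. g i) = (\<Sum>i\<in>A. f (g i))"
  by (induction A rule: infinite_finite_induct) (auto simp: lin_fun_zero, simp add: lin_fun_def)
lemma lin_fun_decomp: "lin_fun f \<Longrightarrow> f x = (\<Sum>b\<in>Poly_Mapping.keys x. Poly_Mapping.lookup x b * f (Poly_Mapping.single b 1))"
  apply (subst pm_decomp_smul)
  apply (simp add: lin_fun_sum)
  apply (simp add: lin_fun_def)
  done

lemma bilin_left: "bilin F \<Longrightarrow> lin_fun (\<lambda>x. F x y)" by (simp add: bilin_def)
lemma bilin_right: "bilin F \<Longrightarrow> lin_fun (F x)" using bilin_def by (metis (no_types) ext)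
lemma bilin_decomp: "bilin F \<Longrightarrow> F x = (\<lambda>y. \<Sum>b\<in>Poly_Mapping.keys x. Poly_Mapping.lookup x b * F (Poly_Mapping.single b 1) y)"
  by (rule ext) (drule bilin_left, drule lin_fun_decomp, assumption)



definition lext :: "('b list \<Rightarrow> ('b, 'k::field) tens) \<Rightarrow> ('b, 'k) tens \<Rightarrow> ('b, 'k) tens" where
  "lext \<phi> u = (\<Sum>w\<in>Poly_Mapping.keys u. smul (Poly_Mapping.lookup u w) (\<phi> w))"

lemma lext_superset: "finite A \<Longrightarrow> Poly_Mapping.keys u \<subseteq> A \<Longrightarrow>
    lext \<phi> u = (\<Sum>w\<in>A. smul (Poly_Mapping.lookup u w) (\<phi> w))"
  unfolding lext_def by (rule sum.mono_neutral_left) (auto simp: in_keys_iff)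

lemma lext_add: "lext \<phi> (u + v) = lext \<phi> u + lext \<phi> v"
proof -
  let ?A = "Poly_Mapping.keys u \<union> Poly_Mapping.keys v"
  have "lext \<phi> (u + v) = (\<Sum>w\<in>?A. smul (Poly_Mapping.lookup (u+v) w) (\<phi> w))"
    by (rule lext_superset) (auto dest: subsetD[OF keys_add])
  moreover have "lext \<phi> u = (\<Sum>w\<in>?A. smul (Poly_Mapping.lookup u w) (\<phi> w))"
    by (rule lext_superset) auto
  moreover have "lext \<phi> v = (\<Sum>w\<in>?A. smul (Poly_Mapping.lookup v w) (\<phi> w))"
    by (rule lext_superset) auto
  ultimately show ?thesis by (simp add: lookup_add smul_add_left sum.distrib)
qed

lemma lext_smul: "lext \<phi> (smul c u) = smul c (lext \<phi> u)"
proof -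
  have "lext \<phi> (smul c u) = (\<Sum>w\<in>Poly_Mapping.keys u. smul (Poly_Mapping.lookup (smul c u) w) (\<phi> w))"
    by (rule lext_superset) (auto dest: subsetD[OF keys_smul])
  then show ?thesis by (simp add: lext_def smul_sum_right)
qed

lemma lext_single [simp]: "lext \<phi> (Poly_Mapping.single w c) = smul c (\<phi> w)"
  by (subst lext_superset[where A="{w}"]) auto

lemma lext_zero [simp]: "lext \<phi> 0 = 0"
  by (simp add: lext_def)

lemma tlin_lext: "tlin (lext \<phi>)"
  by (simp add: tlin_def lext_add lext_smul)

lemma tlin_zero: "tlin g \<Longrightarrow> g 0 = 0"
  unfolding tlin_def by (metis smul_zero_left)
lemma tlin_add: "tlin g \<Longrightarrow> g (u + v) = g u + g v" unfolding tlin_def by blast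
lemma tlin_smul: "tlin g \<Longrightarrow> g (smul c u) = smul c (g u)" unfolding tlin_def by blast
lemma tlin_minus: "tlin g \<Longrightarrow> g (u - v) = g u - g v"
  by (metis add_diff_cancel diff_add_cancel tlin_add)
lemma tlin_sum: "tlin g \<Longrightarrow> g (\<Sum>i\<in>A. f i) = (\<Sum>i\<in>A. g (f i))"
  by (induction A rule: infinite_finite_induct) (auto simp: tlin_zero tlin_add)

lemma single_smul1: "Poly_Mapping.single w c = smul c (Poly_Mapping.single w (1::'k::field))"
  by (simp add: smul_single)

lemma tlin_eq:
  fixes g h :: "('b, 'k::field) tens \<Rightarrow> ('b, 'k) tens"
  assumes "tlin g" "tlin h" "\<And>w. g (Poly_Mapping.single w 1) = h (Poly_Mapping.single w 1)"
  shows "g = h"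
proof
  fix u show "g u = h u"
  proof (induction u rule: pm_induct)
    case 1 then show ?case using assms by (simp add: tlin_zero)
  next
    case (2 u v) then show ?case using assms by (simp add: tlin_add)
  next
    case (3 w c) then show ?case using assms by (subst (1 2) single_smul1) (simp add: tlin_smul)
  qed
qed

lemma single_cons: "Poly_Mapping.single (b # w) (1::'k::field) = ex (Poly_Mapping.single b 1) (Poly_Mapping.single w 1)"
  by (simp add: ex_def ex_single)

lemma tlin_eq_words:
  fixes g h :: "('b, 'k::field) tens \<Rightarrow> ('b, 'k) tens"
  assumes "tlin g" "tlin h" "g tone = h tone"
    "\<And>b w. g (Poly_Mapping.single w 1) = h (Poly_Mapping.single w 1) \<Longrightarrow>
       g (ex (Poly_Mapping.single b 1) (Poly_Mapping.single w 1)) = h (ex (Poly_Mapping.single b 1) (Poly_Mapping.single w 1))"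
  shows "g = h"
proof (rule tlin_eq[OF assms(1,2)])
  fix w show "g (Poly_Mapping.single w 1) = h (Poly_Mapping.single w 1)"
    by (induction w) (use assms in \<open>auto simp: tone_def single_cons\<close>)
qed

fun ifw :: "(('b, 'k::field) vec \<Rightarrow> 'k) \<Rightarrow> 'b list \<Rightarrow> ('b, 'k) tens" where
  "ifw f [] = 0"
| "ifw f (b # w) = smul (f (Poly_Mapping.single b 1)) (Poly_Mapping.single w 1)
     - tmult (Poly_Mapping.single [b] 1) (ifw f w)"

definition icon :: "(('b, 'k::field) vec \<Rightarrow> 'k) \<Rightarrow> ('b, 'k) tens \<Rightarrow> ('b, 'k) tens" where
  "icon f = lext (ifw f)"

lemma tlin_icon: "tlin (icon f)" by (simp add: icon_def tlin_lext)
lemma icon_add: "icon f (u + v) = icon f u + icon f v" by (simp add: icon_def lext_add)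
lemma icon_smul: "icon f (smul c u) = smul c (icon f u)" by (simp add: icon_def lext_smul)
lemma icon_zero [simp]: "icon f 0 = 0" by (simp add: icon_def)
lemma icon_minus: "icon f (u - v) = icon f u - icon f v" by (rule tlin_minus[OF tlin_icon])
lemma icon_sum: "icon f (\<Sum>i\<in>A. g i) = (\<Sum>i\<in>A. icon f (g i))" by (rule tlin_sum[OF tlin_icon])
lemma icon_tone [simp]: "icon f tone = 0" by (simp add: icon_def tone_def)

lemma icon_step: "icon f (tmult (Poly_Mapping.single [b] 1) u)
   = smul (f (Poly_Mapping.single b 1)) u - tmult (Poly_Mapping.single [b] 1) (icon f u)"
proof (induction u rule: pm_induct)
  case 1 then show ?case by simp
next
  case (2 u v) then show ?case by (simp add: tmult_add_right icon_add smul_add_right)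
next
  case (3 w c)
  show ?case
    by (simp add: ex_single icon_def smul_minus_right tmult_smul_right)
       (simp add: single_smul1[of w c] mult.commute)
qed

lemma icon_ex: assumes "lin_fun f"
  shows "icon f (ex x u) = smul (f x) u - ex x (icon f u)"
proof -
  have "icon f (ex x u) = (\<Sum>b\<in>Poly_Mapping.keys x. smul (Poly_Mapping.lookup x b)
      (smul (f (Poly_Mapping.single b 1)) u - tmult (Poly_Mapping.single [b] 1) (icon f u)))"
    by (simp add: ex_decomp icon_sum icon_smul icon_step)
  also have "\<dots> = smul (\<Sum>b\<in>Poly_Mapping.keys x. Poly_Mapping.lookup x b * f (Poly_Mapping.single b 1)) u
      - ex x (icon f u)"
    by (simp add: ex_decomp[of x "icon f u"] smul_sum_left smul_minus_right sum_subtractf)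
  finally show ?thesis using lin_fun_decomp[OF assms, of x] by simp
qed

lemma icon_spec: "lin_fun f \<Longrightarrow> tlin (icon f) \<and> icon f tone = 0 \<and>
      (\<forall>x u. icon f (ex x u) = smul (f x) u - ex x (icon f u))"
  by (simp add: tlin_icon icon_ex)

lemma icon_unique:
  assumes "tlin g" "g tone = 0" "\<forall>x u. g (ex x u) = smul (f x) u - ex x (g u)" "lin_fun f"
  shows "g = icon f"
  by (rule tlin_eq_words) (use assms in \<open>auto simp: tlin_icon icon_ex\<close>)

lemma iop_eq: "lin_fun f \<Longrightarrow> iop f = icon f"
  unfolding iop_def
  by (rule the_equality) (auto simp: icon_spec intro: icon_unique)

lemma iF_eq: "bilin F \<Longrightarrow> iF F x = icon (F x)"
  by (simp add: iF_def iop_eq bilin_right)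



lemma ifw_zero_fun: "ifw (\<lambda>y. 0) w = 0"
  by (induction w) auto
lemma ifw_add_fun: "ifw (\<lambda>y. f y + g y) w = ifw f w + ifw g w"
  by (induction w) (auto simp: smul_add_left tmult_add_right algebra_simps)
lemma ifw_scale_fun: "ifw (\<lambda>y. c * f y) w = smul c (ifw f w)"
  by (induction w) (auto simp: smul_minus_right tmult_smul_right)
lemma ifw_sum_fun: "ifw (\<lambda>y. \<Sum>i\<in>A. f i y) w = (\<Sum>i\<in>A. ifw (f i) w)"
proof (induction A rule: infinite_finite_induct)
  case (infinite A) then show ?case by (simp add: ifw_zero_fun)
next
  case empty then show ?case by (simp add: ifw_zero_fun)
next
  case (insert i A) then show ?case by (simp add: ifw_add_fun)
qed

lemma icon_sum_fun: "icon (\<lambda>y. \<Sum>i\<in>A. f i y) u = (\<Sum>i\<in>A. icon (f i) u)"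
  unfolding icon_def lext_def
  by (simp add: ifw_sum_fun smul_sum_right) (rule sum.swap)
lemma icon_scale_fun: "icon (\<lambda>y. c * f y) u = smul c (icon f u)"
  unfolding icon_def lext_def
  by (simp add: ifw_scale_fun smul_sum_right mult.commute)
lemma icon_add_fun: "icon (\<lambda>y. f y + g y) u = icon f u + icon g u"
  unfolding icon_def lext_def
  by (simp add: ifw_add_fun smul_add_right sum.distrib)
lemma icon_zero_fun: "icon (\<lambda>y. 0) u = 0"
  unfolding icon_def lext_def by (simp add: ifw_zero_fun)

lemma icon_bilin: assumes "bilin F"
  shows "icon (F x) u = (\<Sum>b\<in>Poly_Mapping.keys x. smul (Poly_Mapping.lookup x b) (icon (F (Poly_Mapping.single b 1)) u))"
  apply (subst bilin_decomp[OF assms])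
  apply (simp add: icon_sum_fun icon_scale_fun)
  done

lemma ex_uminus: "ex x (- u) = - ex x u"
  using ex_minus[of x 0 u] by simp
lemma icon_uminus: "icon f (- u) = - icon f u"
  using icon_minus[of f 0 u] by simp

lemma tlin_comp: "tlin g \<Longrightarrow> tlin h \<Longrightarrow> tlin (\<lambda>u. g (h u))"
  by (simp add: tlin_def)
lemma tlin_neg: "tlin g \<Longrightarrow> tlin (\<lambda>u. - g u)"
  by (simp add: tlin_def smul_uminus_right)
lemma tlin_plus: "tlin g \<Longrightarrow> tlin h \<Longrightarrow> tlin (\<lambda>u. g u + h u)"
  by (simp add: tlin_def smul_add_right algebra_simps)
lemma tlin_id: "tlin (\<lambda>u. u)" by (simp add: tlin_def)

lemma icon_anticomm:
  fixes f g :: "('b, 'k::field) vec \<Rightarrow> 'k"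
  assumes f: "lin_fun f" and g: "lin_fun g"
  shows "icon f (icon g u) = - icon g (icon f u)"
proof -
  have "(\<lambda>u. icon f (icon g u)) = (\<lambda>u. - icon g (icon f u))"
  proof (rule tlin_eq_words)
    show "tlin (\<lambda>u. icon f (icon g u))" by (rule tlin_comp[OF tlin_icon tlin_icon])
    show "tlin (\<lambda>u. - icon g (icon f u))" by (rule tlin_neg[OF tlin_comp[OF tlin_icon tlin_icon]])
    show "icon f (icon g tone) = - icon g (icon f tone)" by simp
  next
    fix b :: 'b and w :: "'b list"
    let ?x = "Poly_Mapping.single b (1::'k)" and ?s = "Poly_Mapping.single w (1::'k)"
    assume IH: "icon f (icon g ?s) = - icon g (icon f ?s)"
    have e1: "icon f (icon g (ex ?x ?s)) = smul (g ?x) (icon f ?s) - (smul (f ?x) (icon g ?s) - ex ?x (icon f (icon g ?s)))"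
      by (simp only: icon_ex f g icon_minus icon_smul)
    have e2: "icon g (icon f (ex ?x ?s)) = smul (f ?x) (icon g ?s) - (smul (g ?x) (icon f ?s) - ex ?x (icon g (icon f ?s)))"
      by (simp only: icon_ex f g icon_minus icon_smul)
    show "icon f (icon g (ex ?x ?s)) = - icon g (icon f (ex ?x ?s))"
      unfolding e1 e2 IH ex_uminus by (simp add: algebra_simps)
  qed
  then show ?thesis by (rule fun_cong)
qed

definition Lb :: "(('b, 'k::field) vec \<Rightarrow> ('b, 'k) vec \<Rightarrow> 'k) \<Rightarrow> 'b \<Rightarrow> ('b, 'k) tens \<Rightarrow> ('b, 'k) tens" where
  "Lb F b v = ex (Poly_Mapping.single b 1) v + icon (F (Poly_Mapping.single b 1)) v"

fun Lword :: "(('b, 'k::field) vec \<Rightarrow> ('b, 'k) vec \<Rightarrow> 'k) \<Rightarrow> 'b list \<Rightarrow> ('b, 'k) tens \<Rightarrow> ('b, 'k) tens" where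
  "Lword F [] v = v"
| "Lword F (b # w) v = Lb F b (Lword F w v)"

lemma tlin_Lb: "tlin (Lb F b)"
  by (simp add: tlin_def Lb_def ex_add ex_smul icon_add icon_smul smul_add_right)

lemma tlin_Lword: "tlin (Lword F w)"
proof (induction w)
  case Nil then show ?case using tlin_id by (simp add: tlin_def)
next
  case (Cons b w)
  have "tlin (\<lambda>u. Lb F b (Lword F w u))" by (rule tlin_comp[OF tlin_Lb Cons])
  then show ?case by (simp add: tlin_def)
qed

lemma Lword_append: "Lword F (w1 @ w2) v = Lword F w1 (Lword F w2 v)"
  by (induction w1) auto


definition Phi :: "(('b, 'k::field) vec \<Rightarrow> ('b, 'k) vec \<Rightarrow> 'k) \<Rightarrow> ('b, 'k) tens \<Rightarrow> ('b, 'k) tens \<Rightarrow> ('b, 'k) tens" where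
  "Phi F u v = lext (\<lambda>w. Lword F w v) u"

lemma tlin_Phi: "tlin (Phi F u)"
  unfolding tlin_def Phi_def lext_def
  by (simp add: tlin_add[OF tlin_Lword] tlin_smul[OF tlin_Lword] smul_add_right sum.distrib smul_sum_right mult.commute)

lemma Phi_add: "Phi F (u + v) = (\<lambda>w. Phi F u w + Phi F v w)"
  by (simp add: fun_eq_iff Phi_def lext_add)
lemma Phi_smul: "Phi F (smul c u) = (\<lambda>w. smul c (Phi F u w))"
  by (simp add: fun_eq_iff Phi_def lext_smul)
lemma Phi_tone: "Phi F tone = id"
  by (simp add: Phi_def tone_def fun_eq_iff)
lemma Phi_zero: "Phi F 0 = (\<lambda>w. 0)"
  by (simp add: fun_eq_iff Phi_def)

lemma Phi_mult: "Phi F (tmult u v) = Phi F u \<circ> Phi F v"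
proof
  fix t
  show "Phi F (tmult u v) t = (Phi F u \<circ> Phi F v) t"
  proof (induction u rule: pm_induct)
    case 1 then show ?case by (simp add: Phi_zero)
  next
    case (2 u1 u2) then show ?case by (simp add: tmult_add_left Phi_add)
  next
    case (3 w1 a)
    show ?case
    proof (induction v rule: pm_induct)
      case 1 then show ?case by (simp add: Phi_zero tlin_zero[OF tlin_Phi])
    next
      case (2 v1 v2) then show ?case by (simp add: tmult_add_right Phi_add tlin_add[OF tlin_Phi])
    next
      case (3 w2 b)
      show ?case
        by (simp add: tmult_single Phi_def Lword_append tlin_smul[OF tlin_Lword])
    qed
  qed
qed

lemma lext_sum: "lext \<phi> (\<Sum>i\<in>A. f i) = (\<Sum>i\<in>A. lext \<phi> (f i))"
  by (rule tlin_sum[OF tlin_lext])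

lemma Phi_incl: assumes "bilin F"
  shows "Phi F (incl x) = (\<lambda>w. ex x w + iF F x w)"
proof
  fix v
  have "Phi F (incl x) v = (\<Sum>b\<in>Poly_Mapping.keys x. smul (Poly_Mapping.lookup x b)
     (ex (Poly_Mapping.single b 1) v + icon (F (Poly_Mapping.single b 1)) v))"
    by (simp add: Phi_def incl_decomp lext_sum lext_smul Lb_def)
  also have "\<dots> = ex x v + icon (F x) v"
    unfolding smul_add_right sum.distrib icon_bilin[OF assms, of x v] ex_decomp[of x v]
    by (simp add: ex_def)
  finally show "Phi F (incl x) v = ex x v + iF F x v" by (simp add: iF_eq assms)
qed

lemma LamF_eq: assumes "bilin F" shows "LamF F = Phi F"
  unfolding LamF_def
proof (rule the_equality)
  show "(\<forall>u. tlin (Phi F u)) \<and>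
    (\<forall>u v. Phi F (u + v) = (\<lambda>w. Phi F u w + Phi F v w)) \<and>
    (\<forall>c u. Phi F (smul c u) = (\<lambda>w. smul c (Phi F u w))) \<and>
    Phi F tone = id \<and>
    (\<forall>u v. Phi F (tmult u v) = Phi F u \<circ> Phi F v) \<and>
    (\<forall>x. Phi F (incl x) = (\<lambda>w. ex x w + iF F x w))"
    by (simp add: tlin_Phi Phi_add Phi_smul Phi_tone Phi_mult Phi_incl assms)
next
  fix \<Phi>
  assume H: "(\<forall>u. tlin (\<Phi> u)) \<and>
    (\<forall>u v. \<Phi> (u + v) = (\<lambda>w. \<Phi> u w + \<Phi> v w)) \<and>
    (\<forall>c u. \<Phi> (smul c u) = (\<lambda>w. smul c (\<Phi> u w))) \<and>
    \<Phi> tone = id \<and>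
    (\<forall>u v. \<Phi> (tmult u v) = \<Phi> u \<circ> \<Phi> v) \<and>
    (\<forall>x. \<Phi> (incl x) = (\<lambda>w. ex x w + iF F x w))"
  note H1 = H[THEN conjunct2] note H2 = H1[THEN conjunct2] note H3 = H2[THEN conjunct2] note H4 = H3[THEN conjunct2]
  note H5 = H4[THEN conjunct2]
  have Hadd: "\<And>u v. \<Phi> (u + v) = (\<lambda>w. \<Phi> u w + \<Phi> v w)"
    and Hsmul: "\<And>c u. \<Phi> (smul c u) = (\<lambda>w. smul c (\<Phi> u w))"
    and Hone: "\<Phi> tone = id"
    and Hmult: "\<And>u v. \<Phi> (tmult u v) = \<Phi> u \<circ> \<Phi> v"
    and Hincl: "\<And>x. \<Phi> (incl x) = (\<lambda>w. ex x w + iF F x w)"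
    using H1[THEN conjunct1] H2[THEN conjunct1] H3[THEN conjunct1] H4[THEN conjunct1] H5 by auto
  have W: "\<Phi> (Poly_Mapping.single w 1) = Phi F (Poly_Mapping.single w 1)" for w
  proof (induction w)
    case Nil
    have t: "Poly_Mapping.single [] 1 = tone" by (simp add: tone_def)
    show ?case unfolding t Hone Phi_tone ..
  next
    case (Cons b w)
    have e: "Poly_Mapping.single (b # w) 1 = tmult (incl (Poly_Mapping.single b 1)) (Poly_Mapping.single w 1)"
      by (simp add: ex_single)
    show ?case unfolding e Hmult Phi_mult Hincl Phi_incl[OF assms] Cons ..
  qed
  have "\<Phi> u = Phi F u" for u
  proof (induction u rule: pm_induct)
    case 1
    have "\<Phi> 0 = \<Phi> (smul 0 tone)" by simp
    also have "\<dots> = (\<lambda>w. 0)" unfolding Hsmul by simp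
    finally show ?case by (simp add: Phi_zero)
  next
    case (2 u v) then show ?case unfolding Hadd Phi_add by simp
  next
    case (3 w c) show ?case unfolding single_smul1[of w c] Hsmul Phi_smul W ..
  qed
  then show "\<Phi> = Phi F" by blast
qed

lemma lamF_eq: "bilin F \<Longrightarrow> lamF F u = Phi F u tone"
  by (simp add: lamF_def LamF_eq)



lemma bilin_add: "bilin F \<Longrightarrow> bilin G \<Longrightarrow> bilin (\<lambda>x y. F x y + G x y)"
  unfolding bilin_def lin_fun_def by (simp add: algebra_simps)
lemma bilin_neg: "bilin F \<Longrightarrow> bilin (\<lambda>x y. - F x y)"
  unfolding bilin_def lin_fun_def by (simp add: algebra_simps)
lemma bilin_zero: "bilin (\<lambda>x y. 0)"
  unfolding bilin_def lin_fun_def by simp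

lemma tlin_lam: "bilin F \<Longrightarrow> tlin (lamF F)"
  by (simp add: tlin_def lamF_eq Phi_add Phi_smul)

lemma lam_tone: "bilin F \<Longrightarrow> lamF F tone = tone"
  by (simp add: lamF_eq Phi_tone)

lemma lam_incl: "bilin F \<Longrightarrow> lamF F (incl x) = incl x"
  by (simp add: lamF_eq Phi_incl ex_def iF_eq)

lemma lam_ex: "bilin F \<Longrightarrow> lamF F (ex x u) = iF F x (lamF F u) + ex x (lamF F u)"
  by (simp add: lamF_eq ex_def Phi_mult Phi_incl add.commute)

lemma lam_ex': "bilin F \<Longrightarrow> lamF F (ex x u) = icon (F x) (lamF F u) + ex x (lamF F u)"
  by (simp add: lam_ex iF_eq)

lemma lam_icon:
  fixes F :: "('b, 'k::field) vec \<Rightarrow> ('b, 'k) vec \<Rightarrow> 'k"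
  assumes F: "bilin F" and f: "lin_fun f"
  shows "lamF F (icon f u) = icon f (lamF F u)"
proof -
  have "(\<lambda>u. lamF F (icon f u)) = (\<lambda>u. icon f (lamF F u))"
  proof (rule tlin_eq_words)
    show "tlin (\<lambda>u. lamF F (icon f u))" by (rule tlin_comp[OF tlin_lam[OF F] tlin_icon])
    show "tlin (\<lambda>u. icon f (lamF F u))" by (rule tlin_comp[OF tlin_icon tlin_lam[OF F]])
    show "lamF F (icon f tone) = icon f (lamF F tone)"
      by (simp add: lam_tone F tlin_zero[OF tlin_lam[OF F]])
  next
    fix b :: 'b and w :: "'b list"
    let ?x = "Poly_Mapping.single b (1::'k)" and ?s = "Poly_Mapping.single w (1::'k)"
    assume IH: "lamF F (icon f ?s) = icon f (lamF F ?s)"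
    have AC: "icon f (icon (F ?x) v) = - icon (F ?x) (icon f v)" for v
      by (rule icon_anticomm[OF f bilin_right[OF F]])
    have e1: "lamF F (icon f (ex ?x ?s)) = smul (f ?x) (lamF F ?s)
        - (icon (F ?x) (lamF F (icon f ?s)) + ex ?x (lamF F (icon f ?s)))"
      by (simp only: icon_ex f tlin_minus[OF tlin_lam[OF F]] tlin_smul[OF tlin_lam[OF F]] lam_ex'[OF F])
    have e2: "icon f (lamF F (ex ?x ?s)) = icon f (icon (F ?x) (lamF F ?s))
        + (smul (f ?x) (lamF F ?s) - ex ?x (icon f (lamF F ?s)))"
      by (simp only: lam_ex'[OF F] icon_add icon_ex f)
    show "lamF F (icon f (ex ?x ?s)) = icon f (lamF F (ex ?x ?s))"
      unfolding e1 e2 IH AC by (simp add: algebra_simps)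
  qed
  then show ?thesis by (rule fun_cong)
qed

lemma lam_comp:
  fixes F G :: "('b, 'k::field) vec \<Rightarrow> ('b, 'k) vec \<Rightarrow> 'k"
  assumes F: "bilin F" and G: "bilin G"
  shows "lamF F \<circ> lamF G = lamF (\<lambda>x y. F x y + G x y)"
proof -
  have H: "bilin (\<lambda>x y. F x y + G x y)" by (rule bilin_add[OF F G])
  have "(\<lambda>u. lamF F (lamF G u)) = lamF (\<lambda>x y. F x y + G x y)"
  proof (rule tlin_eq_words)
    show "tlin (\<lambda>u. lamF F (lamF G u))" by (rule tlin_comp[OF tlin_lam[OF F] tlin_lam[OF G]])
    show "tlin (lamF (\<lambda>x y. F x y + G x y))" by (rule tlin_lam[OF H])
    show "lamF F (lamF G tone) = lamF (\<lambda>x y. F x y + G x y) tone"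
      by (simp add: lam_tone F G H)
  next
    fix b :: 'b and w :: "'b list"
    let ?x = "Poly_Mapping.single b (1::'k)" and ?s = "Poly_Mapping.single w (1::'k)"
    assume IH: "lamF F (lamF G ?s) = lamF (\<lambda>x y. F x y + G x y) ?s"
    have e1: "lamF F (lamF G (ex ?x ?s)) = icon (G ?x) (lamF F (lamF G ?s))
       + (icon (F ?x) (lamF F (lamF G ?s)) + ex ?x (lamF F (lamF G ?s)))"
      by (simp only: lam_ex'[OF G] tlin_add[OF tlin_lam[OF F]] lam_icon[OF F bilin_right[OF G]] lam_ex'[OF F])
    have e2: "lamF (\<lambda>x y. F x y + G x y) (ex ?x ?s) = icon (F ?x) (lamF (\<lambda>x y. F x y + G x y) ?s)
       + icon (G ?x) (lamF (\<lambda>x y. F x y + G x y) ?s) + ex ?x (lamF (\<lambda>x y. F x y + G x y) ?s)"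
      by (simp only: lam_ex'[OF H] icon_add_fun)
    show "lamF F (lamF G (ex ?x ?s)) = lamF (\<lambda>x y. F x y + G x y) (ex ?x ?s)"
      unfolding e1 e2 IH by (simp add: algebra_simps)
  qed
  then show ?thesis by (simp add: comp_def)
qed

lemma lam_zero: "lamF (\<lambda>x y. 0 :: 'k::field) = (id :: ('b, 'k) tens \<Rightarrow> ('b, 'k) tens)"
proof (rule tlin_eq_words)
  show "tlin (lamF (\<lambda>x y. 0 :: 'k))" by (rule tlin_lam[OF bilin_zero])
  show "tlin (id :: ('b, 'k) tens \<Rightarrow> ('b, 'k) tens)" by (simp add: tlin_def)
  show "lamF (\<lambda>x y. 0 :: 'k) tone = id (tone :: ('b, 'k) tens)" by (simp add: lam_tone bilin_zero)
next
  fix b :: 'b and w :: "'b list"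
  assume IH: "lamF (\<lambda>x y. 0 :: 'k) (Poly_Mapping.single w 1) = id (Poly_Mapping.single w 1)"
  show "lamF (\<lambda>x y. 0 :: 'k) (ex (Poly_Mapping.single b 1) (Poly_Mapping.single w 1)) =
        id (ex (Poly_Mapping.single b 1) (Poly_Mapping.single w 1))"
    using IH by (simp add: lam_ex'[OF bilin_zero] icon_zero_fun)
qed

lemma lam_bij: assumes F: "bilin F" shows "bij (lamF F)"
proof (rule o_bij)
  have "lamF F \<circ> lamF (\<lambda>x y. - F x y) = lamF (\<lambda>x y. F x y + - F x y)"
    by (rule lam_comp[OF F bilin_neg[OF F]])
  then show "lamF F \<circ> lamF (\<lambda>x y. - F x y) = id" by (simp add: lam_zero)
  have "lamF (\<lambda>x y. - F x y) \<circ> lamF F = lamF (\<lambda>x y. - F x y + F x y)"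
    by (rule lam_comp[OF bilin_neg[OF F] F])
  then show "lamF (\<lambda>x y. - F x y) \<circ> lamF F = id" by (simp add: lam_zero)
qed

lemma lookup_alpha [simp]: "Poly_Mapping.lookup (alpha u) w = (-1) ^ length w * Poly_Mapping.lookup u w"
proof -
  have "finite {w. (-1) ^ length w * Poly_Mapping.lookup u w \<noteq> 0}"
    by (rule finite_subset[of _ "Poly_Mapping.keys u"]) (auto simp: in_keys_iff)
  then show ?thesis by (simp add: alpha_def)
qed

lemma alpha_add: "alpha (u + v) = alpha u + alpha v"
  by (rule poly_mapping_eqI) (simp add: lookup_add algebra_simps)
lemma alpha_smul: "alpha (smul c u) = smul c (alpha u)"
  by (rule poly_mapping_eqI) (simp add: algebra_simps)
lemma alpha_minus: "alpha (u - v) = alpha u - alpha v"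
  by (rule poly_mapping_eqI) (simp add: lookup_minus algebra_simps)
lemma alpha_uminus: "alpha (- u) = - alpha u"
  by (rule poly_mapping_eqI) (simp add: algebra_simps)
lemma alpha_alpha [simp]: "alpha (alpha u) = u"
  by (rule poly_mapping_eqI) (simp flip: power_add mult.assoc add: power_add[symmetric] mult_2[symmetric])
lemma alpha_zero [simp]: "alpha 0 = 0"
  by (rule poly_mapping_eqI) simp
lemma alpha_tone [simp]: "alpha tone = tone"
  by (rule poly_mapping_eqI) (simp add: tone_def lookup_single when_def)
lemma alpha_single: "alpha (Poly_Mapping.single w c) = Poly_Mapping.single w ((-1) ^ length w * c)"
  by (rule poly_mapping_eqI) (simp add: lookup_single when_def)
lemma tlin_alpha: "tlin alpha" by (simp add: tlin_def alpha_add alpha_smul)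

lemma alpha_step: "alpha (tmult (Poly_Mapping.single [b] 1) u) = - tmult (Poly_Mapping.single [b] 1) (alpha u)"
proof (induction u rule: pm_induct)
  case 1 then show ?case by simp
next
  case (2 u v) then show ?case by (simp add: tmult_add_right alpha_add)
next
  case (3 w c) then show ?case by (simp add: ex_single alpha_single single_uminus)
qed

lemma alpha_ex: "alpha (ex x u) = - ex x (alpha u)"
  unfolding ex_decomp[of x u] ex_decomp[of x "alpha u"]
  by (simp add: tlin_sum[OF tlin_alpha] alpha_smul alpha_step smul_uminus_right sum_negf)

lemma alpha_icon: assumes f: "lin_fun f" shows "alpha (icon f v) = - icon f (alpha v)"
proof -
  let ?h = "\<lambda>u. - alpha (icon f (alpha u))"
  have "?h = icon f"
  proof (rule icon_unique[OF _ _ _ f])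
    show "tlin ?h" by (rule tlin_neg[OF tlin_comp[OF tlin_alpha tlin_comp[OF tlin_icon tlin_alpha]]])
    show "?h tone = 0" by simp
    show "\<forall>x u. ?h (ex x u) = smul (f x) u - ex x (?h u)"
      by (simp add: alpha_ex icon_uminus icon_ex[OF f] alpha_uminus alpha_minus alpha_smul ex_uminus)
  qed
  then have "icon f (alpha v) = - alpha (icon f v)" by (metis alpha_alpha)
  then show ?thesis by simp
qed

lemma tword_cons: "tword (x # xs) = ex x (tword xs)"
  by (simp add: tword_def ex_def)
lemma tword_nil: "tword [] = tone"
  by (simp add: tword_def)

lemma lam_parity: assumes F: "bilin F"
  shows "alpha (lamF F (tword xs)) = smul ((-1) ^ length xs) (lamF F (tword xs))"
proof (induction xs)
  case Nil then show ?case by (simp add: tword_nil lam_tone F)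
next
  case (Cons x xs)
  show ?case
    by (simp add: tword_cons lam_ex'[OF F] alpha_add alpha_ex alpha_icon[OF bilin_right[OF F]] Cons
        icon_smul ex_smul smul_uminus_left smul_add_right)
qed


theorem mainTheorem3:
  fixes F :: "('b, 'k::field) vec \<Rightarrow> ('b, 'k) vec \<Rightarrow> 'k"
  assumes "bilin F"
  shows "lamF F tone = tone \<and> (\<forall>x. lamF F (incl x) = incl x)
    \<and> (\<forall>x u. lamF F (ex x u) = iF F x (lamF F u) + ex x (lamF F u))
    \<and> (\<forall>f. lin_fun f \<longrightarrow> lamF F \<circ> iop f = iop f \<circ> lamF F)
    \<and> (\<forall>G. bilin G \<longrightarrow> lamF F \<circ> lamF G = lamF (\<lambda>x y. F x y + G x y))
    \<and> lamF (\<lambda>x y. 0 :: 'k) = (id :: ('b, 'k) tens \<Rightarrow> ('b, 'k) tens)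
    \<and> bij (lamF F)
    \<and> (\<forall>xs. alpha (lamF F (tword xs)) = smul ((-1) ^ length xs) (lamF F (tword xs)))"
proof (intro conjI allI impI)
  show "lamF F tone = tone" by (rule lam_tone[OF assms])
  show "lamF F (incl x) = incl x" for x by (rule lam_incl[OF assms])
  show "lamF F (ex x u) = iF F x (lamF F u) + ex x (lamF F u)" for x u by (rule lam_ex[OF assms])
  show "lamF F \<circ> iop f = iop f \<circ> lamF F" if "lin_fun f" for f
    using that by (simp add: fun_eq_iff iop_eq lam_icon[OF assms])
  show "lamF F \<circ> lamF G = lamF (\<lambda>x y. F x y + G x y)" if "bilin G" for G
    by (rule lam_comp[OF assms that])
  show "lamF (\<lambda>x y. 0 :: 'k) = (id :: ('b, 'k) tens \<Rightarrow> ('b, 'k) tens)" by (rule lam_zero)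
  show "bij (lamF F)" by (rule lam_bij[OF assms])
  show "alpha (lamF F (tword xs)) = smul ((-1) ^ length xs) (lamF F (tword xs))" for xs
    by (rule lam_parity[OF assms])
qed

end
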